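(* Let $G$ be a concurrent game structure, $T\subseteq S$, with all states of $T\cup W_2$ absorbing. Let $v$ be a valuation such that $\mathrm{Pre}_1(v)\ge v$ and $v(s)=0$ for all $s\in W_2$. Let $\xi_1$ be a player-1 selector with $\mathrm{Pre}_{1:\xi_1}(v)=\mathrm{Pre}_1(v)$. If $\xi_1$ is proper, then for all player-2 strategies $\pi_2$ we have $\Pr^{\overline{\xi}_1,\pi_2}(\mathrm{Reach}(T))\ge v$, i.e. $\Pr_s^{\overline{\xi}_1,\pi_2}(\mathrm{Reach}(T))\ge v(s)$ for all $s\in S$.
   Context: Concurrent game structure $G=(S,M,\Gamma_1,\Gamma_2,\delta)$: finite states, finite moves, nonempty move sets $\Gamma_i(s)$, transition probabilities $\delta(s,a_1,a_2)\in\mathrm{Distr}(S)$ (simultaneous independent moves). Absorbing state: every move pair leads back to it with probability 1. Selectors assign to each state a distribution on available moves; $\overline{\xi}$ is the memoryless strategy playing $\xi$. $\Pr_s^{\pi_1,\pi_2}$: induced measure on plays from $s$. $\mathrm{Reach}(X)$: plays visiting $X$. $W_2=\{s:\sup_{\pi_1}\inf_{\pi_2}\Pr_s^{\pi_1,\pi_2}(\mathrm{Reach}(T))=0\}$. A valuation is $v:S\to[0,1]$, compared pointwise. $\mathrm{Pre}_{\xi_1,\xi_2}(v)(s)=\sum_{a,b}\sum_tv(t)\delta(s,a,b)(t)\xi_1(s)(a)\xi_2(s)(b)$, $\mathrm{Pre}_{1:\xi_1}(v)(s)=\inf_{\xi_2}\mathrm{Pre}_{\xi_1,\xi_2}(v)(s)$,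 $\mathrm{Pre}_1(v)(s)=\sup_{\xi_1}\mathrm{Pre}_{1:\xi_1}(v)(s)$. A player-1 strategy $\pi_1$ is proper if for every player-2 strategy $\pi_2$ and all $s\in S\setminus(T\cup W_2)$, $\Pr_s^{\pi_1,\pi_2}(\mathrm{Reach}(T\cup W_2))=1$; a selector is proper if its memoryless strategy is. *)

theory Defs
  imports "HOL-Probability.Probability"
begin

text \<open>Histories (finite play prefixes) are nonempty lists of states; the current
  state is the last element.\<close>

definition game :: "('s::finite \<Rightarrow> 'm::finite set) \<Rightarrow> ('s \<Rightarrow> 'm set) \<Rightarrow> ('s \<Rightarrow> 'm \<Rightarrow> 'm \<Rightarrow> 's pmf) \<Rightarrow> bool" where
  "game Mv1 Mv2 delta \<longleftrightarrow> (\<forall>s. Mv1 s \<noteq> {} \<and> Mv2 s \<noteq> {})"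

definition absorbing :: "('s \<Rightarrow> 'm set) \<Rightarrow> ('s \<Rightarrow> 'm set) \<Rightarrow> ('s \<Rightarrow> 'm \<Rightarrow> 'm \<Rightarrow> 's pmf) \<Rightarrow> 's \<Rightarrow> bool" where
  "absorbing Mv1 Mv2 delta s \<longleftrightarrow>
     (\<forall>a\<in>Mv1 s. \<forall>b\<in>Mv2 s. delta s a b = return_pmf s)"

definition strategy :: "('s \<Rightarrow> 'm set) \<Rightarrow> ('s list \<Rightarrow> 'm pmf) \<Rightarrow> bool" where
  "strategy Mv st \<longleftrightarrow> (\<forall>h. h \<noteq> [] \<longrightarrow> set_pmf (st h) \<subseteq> Mv (last h))"

definition selector :: "('s \<Rightarrow> 'm set) \<Rightarrow> ('s \<Rightarrow> 'm pmf) \<Rightarrow> bool" where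
  "selector Mv xi \<longleftrightarrow> (\<forall>s. set_pmf (xi s) \<subseteq> Mv s)"

definition memoryless :: "('s \<Rightarrow> 'm pmf) \<Rightarrow> ('s list \<Rightarrow> 'm pmf)" where
  "memoryless xi = (\<lambda>h. xi (last h))"

definition step :: "('s \<Rightarrow> 'm \<Rightarrow> 'm \<Rightarrow> 's pmf) \<Rightarrow> ('s list \<Rightarrow> 'm pmf) \<Rightarrow> ('s list \<Rightarrow> 'm pmf)
    \<Rightarrow> 's list \<Rightarrow> 's pmf" where
  "step delta pi1 pi2 h =
     bind_pmf (pi1 h) (\<lambda>a. bind_pmf (pi2 h) (\<lambda>b. delta (last h) a b))"

text \<open>Probability, from history h, that the play visits X within n further steps
  (counting the current state).\<close>
fun reach_within :: "('s \<Rightarrow> 'm \<Rightarrow> 'm \<Rightarrow> 's pmf) \<Rightarrow> 's set \<Rightarrow> ('s list \<Rightarrow> 'm pmf)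
    \<Rightarrow> ('s list \<Rightarrow> 'm pmf) \<Rightarrow> nat \<Rightarrow> 's list \<Rightarrow> real" where
  "reach_within delta X pi1 pi2 0 h = (if last h \<in> X then 1 else 0)"
| "reach_within delta X pi1 pi2 (Suc n) h =
     (if last h \<in> X then 1
      else measure_pmf.expectation (step delta pi1 pi2 h)
             (\<lambda>t. reach_within delta X pi1 pi2 n (h @ [t])))"

text \<open>Pr_s^{pi1,pi2}(Reach X): by continuity of the measure from below, the limit
  (supremum) of the probabilities of reaching X within n steps.\<close>
definition reach_prob :: "('s \<Rightarrow> 'm \<Rightarrow> 'm \<Rightarrow> 's pmf) \<Rightarrow> 's set \<Rightarrow> ('s list \<Rightarrow> 'm pmf)
    \<Rightarrow> ('s list \<Rightarrow> 'm pmf) \<Rightarrow> 's \<Rightarrow> real" where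
  "reach_prob delta X pi1 pi2 s = (SUP n. reach_within delta X pi1 pi2 n [s])"

definition W2 :: "('s \<Rightarrow> 'm set) \<Rightarrow> ('s \<Rightarrow> 'm set) \<Rightarrow> ('s \<Rightarrow> 'm \<Rightarrow> 'm \<Rightarrow> 's pmf) \<Rightarrow> 's set \<Rightarrow> 's set" where
  "W2 Mv1 Mv2 delta T =
     {s. (SUP pi1 \<in> {st. strategy Mv1 st}. INF pi2 \<in> {st. strategy Mv2 st}.
            reach_prob delta T pi1 pi2 s) = 0}"

definition Pre_pair :: "('s \<Rightarrow> 'm \<Rightarrow> 'm \<Rightarrow> 's pmf) \<Rightarrow> ('s \<Rightarrow> 'm pmf) \<Rightarrow> ('s \<Rightarrow> 'm pmf)
    \<Rightarrow> ('s \<Rightarrow> real) \<Rightarrow> 's \<Rightarrow> real" where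
  "Pre_pair delta xi1 xi2 v s =
     measure_pmf.expectation (bind_pmf (xi1 s) (\<lambda>a. bind_pmf (xi2 s) (\<lambda>b. delta s a b))) v"

definition Pre1_sel :: "('s \<Rightarrow> 'm set) \<Rightarrow> ('s \<Rightarrow> 'm \<Rightarrow> 'm \<Rightarrow> 's pmf) \<Rightarrow> ('s \<Rightarrow> 'm pmf)
    \<Rightarrow> ('s \<Rightarrow> real) \<Rightarrow> 's \<Rightarrow> real" where
  "Pre1_sel Mv2 delta xi1 v s = (INF xi2 \<in> {xi. selector Mv2 xi}. Pre_pair delta xi1 xi2 v s)"

definition Pre1 :: "('s \<Rightarrow> 'm set) \<Rightarrow> ('s \<Rightarrow> 'm set) \<Rightarrow> ('s \<Rightarrow> 'm \<Rightarrow> 'm \<Rightarrow> 's pmf)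
    \<Rightarrow> ('s \<Rightarrow> real) \<Rightarrow> 's \<Rightarrow> real" where
  "Pre1 Mv1 Mv2 delta v s = (SUP xi1 \<in> {xi. selector Mv1 xi}. Pre1_sel Mv2 delta xi1 v s)"

definition proper_strategy :: "('s \<Rightarrow> 'm set) \<Rightarrow> ('s \<Rightarrow> 'm set) \<Rightarrow> ('s \<Rightarrow> 'm \<Rightarrow> 'm \<Rightarrow> 's pmf)
    \<Rightarrow> 's set \<Rightarrow> ('s list \<Rightarrow> 'm pmf) \<Rightarrow> bool" where
  "proper_strategy Mv1 Mv2 delta T pi1 \<longleftrightarrow>
     (\<forall>pi2. strategy Mv2 pi2 \<longrightarrow>
        (\<forall>s. s \<notin> T \<union> W2 Mv1 Mv2 delta T \<longrightarrow>
           reach_prob delta (T \<union> W2 Mv1 Mv2 delta T) pi1 pi2 s = 1))"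

definition proper_selector :: "('s \<Rightarrow> 'm set) \<Rightarrow> ('s \<Rightarrow> 'm set) \<Rightarrow> ('s \<Rightarrow> 'm \<Rightarrow> 'm \<Rightarrow> 's pmf)
    \<Rightarrow> 's set \<Rightarrow> ('s \<Rightarrow> 'm pmf) \<Rightarrow> bool" where
  "proper_selector Mv1 Mv2 delta T xi \<longleftrightarrow> proper_strategy Mv1 Mv2 delta T (memoryless xi)"

end

theory Submission
  imports Defs
begin

lemma reach_within_bounds:
  "0 \<le> reach_within delta X pi1 pi2 n h \<and> reach_within delta X pi1 pi2 n h \<le> (1::real)"
proof (induction n arbitrary: h)
  case 0
  then show ?case by simp
next
  case (Suc n)
  let ?p = "step delta pi1 pi2 h"
  let ?f = "\<lambda>t. reach_within delta X pi1 pi2 n (h @ [t])"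
  have "0 \<le> measure_pmf.expectation ?p ?f"
    by (rule Bochner_Integration.integral_nonneg) (use Suc in auto)
  moreover have "measure_pmf.expectation ?p ?f \<le> measure_pmf.expectation ?p (\<lambda>_. 1)"
    by (rule Bochner_Integration.integral_mono_AE)
       (auto intro!: measure_pmf.integrable_const_bound[where B=1] simp: Suc)
  moreover have "measure_pmf.expectation ?p (\<lambda>_. 1::real) = 1" by simp
  ultimately show ?case by simp
qed

theorem lemma3:
  fixes Mv1 Mv2 :: "'s::finite \<Rightarrow> 'm::finite set"
    and delta :: "'s \<Rightarrow> 'm \<Rightarrow> 'm \<Rightarrow> 's pmf"
    and T :: "'s set" and v :: "'s \<Rightarrow> real" and xi1 :: "'s \<Rightarrow> 'm pmf"
  assumes "game Mv1 Mv2 delta"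
    and "\<forall>s \<in> T \<union> W2 Mv1 Mv2 delta T. absorbing Mv1 Mv2 delta s"
    and "\<forall>s. 0 \<le> v s \<and> v s \<le> 1"
    and "\<forall>s. v s \<le> Pre1 Mv1 Mv2 delta v s"
    and "\<forall>s \<in> W2 Mv1 Mv2 delta T. v s = 0"
    and "selector Mv1 xi1"
    and "Pre1_sel Mv2 delta xi1 v = Pre1 Mv1 Mv2 delta v"
    and "proper_selector Mv1 Mv2 delta T xi1"
  shows "\<forall>pi2. strategy Mv2 pi2 \<longrightarrow>
           (\<forall>s. reach_prob delta T (memoryless xi1) pi2 s \<ge> v s)"
proof (intro allI impI)
  fix pi2 s assume st2: "strategy Mv2 pi2"
  define W where "W = W2 Mv1 Mv2 delta T"
  define R where "R = reach_within delta T (memoryless xi1) pi2"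
  define R' where "R' = reach_within delta (T \<union> W) (memoryless xi1) pi2"
  have integ: "\<And>p (f::'s \<Rightarrow> real). integrable (measure_pmf p) f"
    by (rule integrable_measure_pmf_finite) simp
  have sub: "v (last h) \<le> measure_pmf.expectation (step delta (memoryless xi1) pi2 h) v"
    if "h \<noteq> []" for h
  proof -
    define xi2 where "xi2 = (\<lambda>s'. if s' = last h then pi2 h else return_pmf (SOME b. b \<in> Mv2 s'))"
    have sel: "selector Mv2 xi2"
      unfolding selector_def xi2_def
    proof
      fix s'
      have "Mv2 s' \<noteq> {}" using assms(1) by (simp add: game_def)
      then have "(SOME b. b \<in> Mv2 s') \<in> Mv2 s'" by (meson ex_in_conv someI_ex)
      then show "set_pmf (if s' = last h then pi2 h else return_pmf (SOME b. b \<in> Mv2 s')) \<subseteq> Mv2 s'"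
        using st2 that by (auto simp: strategy_def)
    qed
    have eq: "Pre_pair delta xi1 xi2 v (last h) = measure_pmf.expectation (step delta (memoryless xi1) pi2 h) v"
      by (simp add: Pre_pair_def step_def memoryless_def xi2_def)
    have bdd: "bdd_below ((\<lambda>xi2. Pre_pair delta xi1 xi2 v (last h)) ` {xi. selector Mv2 xi})"
      by (rule bdd_belowI[where m=0])
         (auto simp: Pre_pair_def intro!: Bochner_Integration.integral_nonneg assms(3)[rule_format, THEN conjunct1])
    have "Pre1_sel Mv2 delta xi1 v (last h) \<le> Pre_pair delta xi1 xi2 v (last h)"
      unfolding Pre1_sel_def by (rule cINF_lower[OF bdd]) (use sel in simp)
    moreover have "v (last h) \<le> Pre1_sel Mv2 delta xi1 v (last h)"
      using assms(4) assms(7) by metis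
    ultimately show ?thesis using eq by simp
  qed
  have claim: "\<forall>h. h \<noteq> [] \<longrightarrow> v (last h) \<le> R n h + 1 - R' n h" for n
  proof (induction n)
    case 0
    show ?case
      using assms(3,5) by (auto simp: R_def R'_def W_def)
  next
    case (Suc n)
    show ?case
    proof (intro allI impI)
      fix h :: "'s list" assume hne: "h \<noteq> []"
      show "v (last h) \<le> R (Suc n) h + 1 - R' (Suc n) h"
      proof (cases "last h \<in> T \<union> W")
        case True
        then show ?thesis
          using assms(3,5) reach_within_bounds[of delta T "memoryless xi1" pi2 "Suc n" h]
          by (auto simp: R_def R'_def W_def)
      next
        case False
        let ?p = "step delta (memoryless xi1) pi2 h"
        have "v (last h) \<le> measure_pmf.expectation ?p v" using sub hne by blast
        also have "\<dots> \<le> measure_pmf.expectation ?p (\<lambda>t. R n (h @ [t]) + 1 - R' n (h @ [t]))"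
          by (rule Bochner_Integration.integral_mono[OF integ integ])
             (use Suc[rule_format, of "h @ [_]"] in simp)
        also have "\<dots> = measure_pmf.expectation ?p (\<lambda>t. R n (h @ [t])) + 1
                         - measure_pmf.expectation ?p (\<lambda>t. R' n (h @ [t]))"
          by (simp add: Bochner_Integration.integral_diff[OF integ integ]
                        Bochner_Integration.integral_add[OF integ integ])
        also have "\<dots> = R (Suc n) h + 1 - R' (Suc n) h"
          using False by (simp add: R_def R'_def)
        finally show ?thesis .
      qed
    qed
  qed
  have bddR: "bdd_above (range (\<lambda>n. R n [s]))"
    by (rule bdd_aboveI[where M=1]) (auto simp: R_def reach_within_bounds)
  have approx: "\<exists>n. R' n [s] > 1 - e" if "e > 0" for e
  proof (cases "s \<in> T \<union> W")
    case True
    then show ?thesis using that by (intro exI[of _ 0]) (auto simp: R'_def)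
  next
    case False
    have "reach_prob delta (T \<union> W) (memoryless xi1) pi2 s = 1"
      using assms(8) st2 False by (auto simp: proper_selector_def proper_strategy_def W_def)
    then have "(SUP n. R' n [s]) = 1" by (simp add: reach_prob_def R'_def)
    moreover have "bdd_above (range (\<lambda>n. R' n [s]))"
      by (rule bdd_aboveI[where M=1]) (auto simp: R'_def reach_within_bounds)
    ultimately show ?thesis using that less_cSUP_iff[of "UNIV::nat set" "\<lambda>n. R' n [s]" "1 - e"]
      by auto
  qed
  have epsgoal: "v s \<le> reach_prob delta T (memoryless xi1) pi2 s + e" if epos: "e > 0" for e
  proof -
    obtain n where n: "R' n [s] > 1 - e" using approx[OF epos] by blast
    have "v s \<le> R n [s] + 1 - R' n [s]" using claim[of n, rule_format, of "[s]"] by simp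
    also have "R n [s] \<le> reach_prob delta T (memoryless xi1) pi2 s"
      unfolding reach_prob_def R_def[symmetric] by (rule cSUP_upper[OF _ bddR]) simp
    finally show ?thesis using n by simp
  qed
  show "v s \<le> reach_prob delta T (memoryless xi1) pi2 s"
    by (rule field_le_epsilon) (use epsgoal in auto)
qed

end
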